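(* Let $G$ be a group, $\nu$ a conjugation-invariant pseudo-norm on $G$, and $H,K$ subgroups of $G$ such that $(G,H)$ satisfies the property $\mathsf{FM}$. Then for any $g\in G$ and any $f\in K$, \[ \nu([g,f])\le 4E_{H,\nu}(K), \] where $[g,f]=gfg^{-1}f^{-1}$.
   Context: A conjugation-invariant pseudo-norm on a group $G$ is a function $\nu\colon G\to\mathbb{R}_{\ge0}$ with $\nu(1)=0$, $\nu(f)=\nu(f^{-1})$, $\nu(fg)\le\nu(f)+\nu(g)$ and $\nu(gfg^{-1})=\nu(f)$ for all $f,g\in G$. For a subgroup $H\le G$, $\nu_H(f)$ is the minimal $k$ such that $f=g_1h_1g_1^{-1}\cdots g_kh_kg_k^{-1}$ ($g_i\in G,h_i\in H$), $\infty$ if none. For $K\subset G$, $\mathrm{D}^f_H(K)$ is the set of $h_0\in G$ such that for all $g_1,\dots,g_k\in G$ there is $h\in G$ with every element of $hh_0h^{-1}K(hh_0h^{-1})^{-1}$ commuting with every element of $g_1Hg_1^{-1}\cup\dots\cup g_kHg_k^{-1}$; $E_{H,\nu}(K)=\inf_{h_0\in\mathrm{D}^f_H(K)}\nu(h_0)$ (infimum of the empty set being $+\infty$). $(G,H)$ satisfies $\mathsf{FM}$ if $\nu_H<\infty$ on $G$ and $\mathrm{D}^f_H(h_1Hh_1^{-1}\cup\dots\cup h_kHh_k^{-1})\ne\emptyset$ for all $h_1,\dots,h_k\in G$. *)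

theory Defs
  imports "HOL-Algebra.Group" "HOL-Library.Extended_Real"
begin

definition conj_inv_pseudo_norm :: "('a, 'b) monoid_scheme \<Rightarrow> ('a \<Rightarrow> real) \<Rightarrow> bool" where
  "conj_inv_pseudo_norm G \<nu> \<longleftrightarrow>
     (\<forall>f\<in>carrier G. \<nu> f \<ge> 0) \<and>
     \<nu> \<one>\<^bsub>G\<^esub> = 0 \<and>
     (\<forall>f\<in>carrier G. \<nu> f = \<nu> (inv\<^bsub>G\<^esub> f)) \<and>
     (\<forall>f\<in>carrier G. \<forall>g\<in>carrier G. \<nu> (f \<otimes>\<^bsub>G\<^esub> g) \<le> \<nu> f + \<nu> g) \<and>
     (\<forall>f\<in>carrier G. \<forall>g\<in>carrier G. \<nu> (g \<otimes>\<^bsub>G\<^esub> f \<otimes>\<^bsub>G\<^esub> inv\<^bsub>G\<^esub> g) = \<nu> f)"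

definition conj_set :: "('a, 'b) monoid_scheme \<Rightarrow> 'a \<Rightarrow> 'a set \<Rightarrow> 'a set" where
  "conj_set G g S = (\<lambda>s. g \<otimes>\<^bsub>G\<^esub> s \<otimes>\<^bsub>G\<^esub> inv\<^bsub>G\<^esub> g) ` S"

text \<open>\<nu>_H(f) < \<infinity>: f is a finite product g1 h1 g1^-1 ... gk hk gk^-1.\<close>
definition nuH_finite :: "('a, 'b) monoid_scheme \<Rightarrow> 'a set \<Rightarrow> 'a \<Rightarrow> bool" where
  "nuH_finite G H f \<longleftrightarrow>
     (\<exists>ps :: ('a \<times> 'a) list. (\<forall>(g, h)\<in>set ps. g \<in> carrier G \<and> h \<in> H) \<and>
        f = foldr (\<lambda>(g, h) x. (g \<otimes>\<^bsub>G\<^esub> h \<otimes>\<^bsub>G\<^esub> inv\<^bsub>G\<^esub> g) \<otimes>\<^bsub>G\<^esub> x) ps \<one>\<^bsub>G\<^esub>)"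

definition Df :: "('a, 'b) monoid_scheme \<Rightarrow> 'a set \<Rightarrow> 'a set \<Rightarrow> 'a set" where
  "Df G H K = {h0 \<in> carrier G. \<forall>gs. set gs \<subseteq> carrier G \<longrightarrow>
      (\<exists>h\<in>carrier G.
         \<forall>x\<in>conj_set G (h \<otimes>\<^bsub>G\<^esub> h0 \<otimes>\<^bsub>G\<^esub> inv\<^bsub>G\<^esub> h) K.
         \<forall>y\<in>(\<Union>g\<in>set gs. conj_set G g H). x \<otimes>\<^bsub>G\<^esub> y = y \<otimes>\<^bsub>G\<^esub> x)}"

text \<open>E_{H,\<nu>}(K), infimum of the empty set being +\<infinity>.\<close>
definition E_Hnu :: "('a, 'b) monoid_scheme \<Rightarrow> 'a set \<Rightarrow> ('a \<Rightarrow> real) \<Rightarrow> 'a set \<Rightarrow> ereal" where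
  "E_Hnu G H \<nu> K = (INF h0\<in>Df G H K. ereal (\<nu> h0))"

definition FM :: "('a, 'b) monoid_scheme \<Rightarrow> 'a set \<Rightarrow> bool" where
  "FM G H \<longleftrightarrow> (\<forall>f\<in>carrier G. nuH_finite G H f) \<and>
     (\<forall>hs. set hs \<subseteq> carrier G \<longrightarrow> Df G H (\<Union>h\<in>set hs. conj_set G h H) \<noteq> {})"

definition commutator :: "('a, 'b) monoid_scheme \<Rightarrow> 'a \<Rightarrow> 'a \<Rightarrow> 'a" where
  "commutator G g f = g \<otimes>\<^bsub>G\<^esub> f \<otimes>\<^bsub>G\<^esub> inv\<^bsub>G\<^esub> g \<otimes>\<^bsub>G\<^esub> inv\<^bsub>G\<^esub> f"

end

theory Submission
  imports Defs
begin

lemma foldr_comm: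
  fixes G (structure)
  assumes "group G" "x \<in> carrier G"
    and "\<forall>(a, b)\<in>set ps. a \<in> carrier G \<and> b \<in> carrier G \<and>
           x \<otimes>\<^bsub>G\<^esub> (a \<otimes>\<^bsub>G\<^esub> b \<otimes>\<^bsub>G\<^esub> inv\<^bsub>G\<^esub> a) = (a \<otimes>\<^bsub>G\<^esub> b \<otimes>\<^bsub>G\<^esub> inv\<^bsub>G\<^esub> a) \<otimes>\<^bsub>G\<^esub> x"
  shows "foldr (\<lambda>(g, h) y. (g \<otimes>\<^bsub>G\<^esub> h \<otimes>\<^bsub>G\<^esub> inv\<^bsub>G\<^esub> g) \<otimes>\<^bsub>G\<^esub> y) ps \<one>\<^bsub>G\<^esub> \<in> carrier G \<and>
         x \<otimes>\<^bsub>G\<^esub> foldr (\<lambda>(g, h) y. (g \<otimes>\<^bsub>G\<^esub> h \<otimes>\<^bsub>G\<^esub> inv\<^bsub>G\<^esub> g) \<otimes>\<^bsub>G\<^esub> y) ps \<one>\<^bsub>G\<^esub>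
          = foldr (\<lambda>(g, h) y. (g \<otimes>\<^bsub>G\<^esub> h \<otimes>\<^bsub>G\<^esub> inv\<^bsub>G\<^esub> g) \<otimes>\<^bsub>G\<^esub> y) ps \<one>\<^bsub>G\<^esub> \<otimes>\<^bsub>G\<^esub> x"
  using assms(3)
proof (induction ps)
  case Nil
  then show ?case using assms by (simp add: group.is_monoid monoid.l_one monoid.r_one)
next
  case (Cons p ps)
  interpret group G by fact
  obtain a b where p: "p = (a, b)" by (cases p)
  let ?F = "foldr (\<lambda>(g, h) y. (g \<otimes> h \<otimes> inv g) \<otimes> y) ps \<one>"
  have ab: "a \<in> carrier G" "b \<in> carrier G"
    and c: "x \<otimes> (a \<otimes> b \<otimes> inv a) = (a \<otimes> b \<otimes> inv a) \<otimes> x"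
    using Cons.prems p by auto
  have IH: "?F \<in> carrier G" "x \<otimes> ?F = ?F \<otimes> x" using Cons by auto
  have cc: "a \<otimes> b \<otimes> inv a \<in> carrier G" using ab by simp
  have "x \<otimes> ((a \<otimes> b \<otimes> inv a) \<otimes> ?F) = (x \<otimes> (a \<otimes> b \<otimes> inv a)) \<otimes> ?F"
    using cc IH assms(2) by (simp add: m_assoc)
  also have "\<dots> = (a \<otimes> b \<otimes> inv a) \<otimes> (x \<otimes> ?F)"
    using c cc IH assms(2) by (simp add: m_assoc)
  also have "\<dots> = ((a \<otimes> b \<otimes> inv a) \<otimes> ?F) \<otimes> x"
    using IH cc assms(2) by (simp add: m_assoc)
  finally show ?case using p cc IH by simp
qed

lemma key_bound:
  fixes G (structure)
  assumes grp: "group G" and nu: "conj_inv_pseudo_norm G \<nu>"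
    and g: "g \<in> carrier G" and f: "f \<in> carrier G" and k: "k \<in> carrier G"
    and com: "(k \<otimes>\<^bsub>G\<^esub> f \<otimes>\<^bsub>G\<^esub> inv\<^bsub>G\<^esub> k) \<otimes>\<^bsub>G\<^esub> g = g \<otimes>\<^bsub>G\<^esub> (k \<otimes>\<^bsub>G\<^esub> f \<otimes>\<^bsub>G\<^esub> inv\<^bsub>G\<^esub> k)"
  shows "\<nu> (commutator G g f) \<le> 4 * \<nu> k"
proof -
  interpret group G by fact
  have ic1 [simp]: "inv a \<otimes> (a \<otimes> b) = b" if "a \<in> carrier G" "b \<in> carrier G" for a b
    using that by (simp add: m_assoc[symmetric])
  have ic2 [simp]: "a \<otimes> (inv a \<otimes> b) = b" if "a \<in> carrier G" "b \<in> carrier G" for a b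
    using that by (simp add: m_assoc[symmetric])
  define c where "c = k \<otimes> f \<otimes> inv k \<otimes> inv f"
  have cC: "c \<in> carrier G" using c_def f k by simp
  have x: "k \<otimes> f \<otimes> inv k = c \<otimes> f" using c_def f k by (simp add: m_assoc)
  have e1: "(c \<otimes> f) \<otimes> g = g \<otimes> (c \<otimes> f)" using com x by simp
  have e2: "c \<otimes> (f \<otimes> g) = g \<otimes> (c \<otimes> f)" using e1 cC f g by (simp add: m_assoc)
  have L: "commutator G g f \<otimes> (f \<otimes> g) = g \<otimes> f"
    unfolding commutator_def using f g by (simp add: m_assoc)
  have R: "(g \<otimes> inv c \<otimes> inv g \<otimes> c) \<otimes> (f \<otimes> g) = g \<otimes> f"
  proof -
    have "(g \<otimes> inv c \<otimes> inv g \<otimes> c) \<otimes> (f \<otimes> g) = g \<otimes> inv c \<otimes> inv g \<otimes> (c \<otimes> (f \<otimes> g))"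
      using cC f g by (simp add: m_assoc)
    also have "\<dots> = g \<otimes> inv c \<otimes> inv g \<otimes> (g \<otimes> (c \<otimes> f))" using e2 by simp
    also have "\<dots> = g \<otimes> f" using cC f g by (simp add: m_assoc)
    finally show ?thesis .
  qed
  have comm: "commutator G g f = g \<otimes> inv c \<otimes> inv g \<otimes> c"
  proof -
    have "commutator G g f \<otimes> (f \<otimes> g) = (g \<otimes> inv c \<otimes> inv g \<otimes> c) \<otimes> (f \<otimes> g)"
      using L R by simp
    moreover have "commutator G g f \<in> carrier G" unfolding commutator_def using f g by simp
    ultimately show ?thesis using right_cancel[of "f \<otimes> g"] cC f g by simp
  qed
  have n0: "\<forall>f\<in>carrier G. \<nu> f = \<nu> (inv f)"
    and ntri: "\<forall>f\<in>carrier G. \<forall>g\<in>carrier G. \<nu> (f \<otimes> g) \<le> \<nu> f + \<nu> g"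
    and nconj: "\<forall>f\<in>carrier G. \<forall>g\<in>carrier G. \<nu> (g \<otimes> f \<otimes> inv g) = \<nu> f"
    using nu unfolding conj_inv_pseudo_norm_def by blast+
  have c2: "c = k \<otimes> (f \<otimes> inv k \<otimes> inv f)" using c_def f k by (simp add: m_assoc)
  have "\<nu> c \<le> \<nu> k + \<nu> (f \<otimes> inv k \<otimes> inv f)"
    using c2 ntri[rule_format, of k "f \<otimes> inv k \<otimes> inv f"] f k by simp
  also have "\<nu> (f \<otimes> inv k \<otimes> inv f) = \<nu> k"
    using nconj[rule_format, of "inv k" f] n0[rule_format, of k] f k by simp
  finally have hc: "\<nu> c \<le> 2 * \<nu> k" by simp
  have "\<nu> (commutator G g f) \<le> \<nu> (g \<otimes> inv c \<otimes> inv g) + \<nu> c"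
    using comm ntri[rule_format, of "g \<otimes> inv c \<otimes> inv g" c] cC g by simp
  also have "\<nu> (g \<otimes> inv c \<otimes> inv g) = \<nu> c"
    using nconj[rule_format, of "inv c" g] n0[rule_format, of c] cC g by simp
  finally show ?thesis using hc by simp
qed

theorem lemma2p6:
  fixes G (structure) and \<nu> :: "'a \<Rightarrow> real" and H K :: "'a set"
  assumes "group G"
    and "conj_inv_pseudo_norm G \<nu>"
    and "subgroup H G" and "subgroup K G"
    and "FM G H"
    and "g \<in> carrier G" and "f \<in> K"
  shows "ereal (\<nu> (commutator G g f)) \<le> 4 * E_Hnu G H \<nu> K"
proof -
  interpret group G by fact
  have fC: "f \<in> carrier G" by (rule subgroup.mem_carrier[OF assms(4,7)])
  have HC: "H \<subseteq> carrier G" by (rule subgroup.subset[OF assms(3)])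
  have nconj: "\<forall>f\<in>carrier G. \<forall>g\<in>carrier G. \<nu> (g \<otimes> f \<otimes> inv g) = \<nu> f"
    by (rule assms(2)[unfolded conj_inv_pseudo_norm_def, THEN conjunct2, THEN conjunct2, THEN conjunct2, THEN conjunct2])
  obtain ps where ps: "\<forall>(a, b)\<in>set ps. a \<in> carrier G \<and> b \<in> H"
    and gps: "g = foldr (\<lambda>(a, b) x. (a \<otimes> b \<otimes> inv a) \<otimes> x) ps \<one>"
  proof -
    have "nuH_finite G H g" using assms(5)[unfolded FM_def, THEN conjunct1] assms(6) by (rule bspec)
    then obtain qs where "(\<forall>(a, b)\<in>set qs. a \<in> carrier G \<and> b \<in> H)"
       "g = foldr (\<lambda>(a, b) x. (a \<otimes> b \<otimes> inv a) \<otimes> x) qs \<one>"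
      unfolding nuH_finite_def by blast
    then show ?thesis using that by blast
  qed
  have bound: "\<nu> (commutator G g f) \<le> 4 * \<nu> h0" if h0: "h0 \<in> Df G H K" for h0
  proof -
    have h0C: "h0 \<in> carrier G" using h0 unfolding Df_def by blast
    have gs: "set (map fst ps) \<subseteq> carrier G" using ps by auto
    obtain h where hC: "h \<in> carrier G" and hp:
      "\<forall>x\<in>conj_set G (h \<otimes> h0 \<otimes> inv h) K.
         \<forall>y\<in>(\<Union>a\<in>set (map fst ps). conj_set G a H). x \<otimes> y = y \<otimes> x"
    proof -
      have "\<forall>gs. set gs \<subseteq> carrier G \<longrightarrow> (\<exists>h\<in>carrier G.
         \<forall>x\<in>conj_set G (h \<otimes> h0 \<otimes> inv h) K.
         \<forall>y\<in>(\<Union>g\<in>set gs. conj_set G g H). x \<otimes> y = y \<otimes> x)"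
        using h0 unfolding Df_def by blast
      from this[rule_format, OF gs] show ?thesis using that by blast
    qed
    define k where "k = h \<otimes> h0 \<otimes> inv h"
    have kC: "k \<in> carrier G" using k_def hC h0C by simp
    define x where "x = k \<otimes> f \<otimes> inv k"
    have xC: "x \<in> carrier G" using x_def kC fC by simp
    have xin: "x \<in> conj_set G k K" unfolding x_def conj_set_def using assms(7) by blast
    have "\<forall>(a, b)\<in>set ps. a \<in> carrier G \<and> b \<in> carrier G \<and>
           x \<otimes> (a \<otimes> b \<otimes> inv a) = (a \<otimes> b \<otimes> inv a) \<otimes> x"
    proof (intro ballI, clarify)
      fix a b assume ab: "(a, b) \<in> set ps"
      have "a \<in> set (map fst ps)" using ab by force
      moreover have "a \<otimes> b \<otimes> inv a \<in> conj_set G a H" unfolding conj_set_def using ab ps by blast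
      ultimately have yin: "a \<otimes> b \<otimes> inv a \<in> (\<Union>a\<in>set (map fst ps). conj_set G a H)"
        by blast
      have xin': "x \<in> conj_set G (h \<otimes> h0 \<otimes> inv h) K" using xin k_def by simp
      have "x \<otimes> (a \<otimes> b \<otimes> inv a) = (a \<otimes> b \<otimes> inv a) \<otimes> x"
        using hp xin' yin by blast
      then show "a \<in> carrier G \<and> b \<in> carrier G \<and>
           x \<otimes> (a \<otimes> b \<otimes> inv a) = (a \<otimes> b \<otimes> inv a) \<otimes> x" using ab ps HC by blast
    qed
    from foldr_comm[OF assms(1) xC this] gps have "x \<otimes> g = g \<otimes> x" by simp
    then have "\<nu> (commutator G g f) \<le> 4 * \<nu> k"
      using key_bound[OF assms(1,2,6) fC kC] x_def by simp
    moreover have "\<nu> k = \<nu> h0" using nconj k_def hC h0C by simp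
    ultimately show ?thesis by simp
  qed
  have "ereal (\<nu> (commutator G g f) / 4) \<le> E_Hnu G H \<nu> K"
    unfolding E_Hnu_def by (rule INF_greatest) (use bound in \<open>fastforce simp: mult.commute\<close>)
  then have "4 * ereal (\<nu> (commutator G g f) / 4) \<le> 4 * E_Hnu G H \<nu> K"
    by (rule ereal_mult_left_mono) simp
  then show ?thesis by simp
qed

end
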